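(* Fix $D,\alpha,\theta>0$. There is a constant $C=C(D,\alpha,\theta)$ such that for every finite connected graph $G$ on $n$ vertices satisfying (bal), (mix), (esc) with parameters $D,\alpha,\theta$, with $n$ sufficiently large, the following holds. Let $Y,Z$ be two independent lazy random walks of length $r-1$ started from two independent $\pi$-distributed vertices. Then, viewing $Y,Z$ as their vertex sets, $$\mathbb E\left[\mathrm{Close}_r(Y,Z)\right]\le C q^4,\qquad q=r/\sqrt n.$$
   Context: For a finite connected graph $G=(V,E)$ with $n$ vertices, $d(v)$ is the degree of $v$, $\delta(G),\Delta(G)$ are the minimum and maximum degrees. The lazy random walk $(X_t)$ on $G$ at each step stays put with probability $1/2$ and otherwise moves along a uniformly chosen edge incident to the current vertex; $\Pr_\mu$ denotes its law with $X_0\sim\mu$. Write $\mathbf p^t(u,v)=\Pr_u(X_t=v)$ and $\pi(v)=d(v)/(2|E|)$. The uniform mixing time is $t_{\mathrm{mix}}(G)=\min\{t\ge0:\max_{u,v\in V}|\mathbf p^t(u,v)/\pi(v)-1|\le 1/2\}$, and the bubble sum is $\mathcal B(G)=\sum_{t=0}^{t_{\mathrm{mix}}(G)}(t+1)\sup_{v}\mathbf p^t(v,v)$. Assumptions with parameters $D,\alpha,\theta>0$: (bal) $\Delta(G)/\delta(G)\le D$; (mix) $t_{\mathrm{mix}}(G)\le n^{1/2-\alpha}$; (esc) $\mathcal B(G)\le\theta$. The run time is $r=n^{1/2-\alpha/3}$ (rounded to an integer). For nonempty $U\subseteq V$, $\tau_U=\min\{t\ge 0:X_t\in U\}$. The $r$-closeness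 of two vertex sets is $\mathrm{Close}_r(U_1,U_2)=\Pr_\pi(\tau_{U_1}<r\text{ and }\tau_{U_2}<r)$, where the probability is over a lazy random walk $X$ with $X_0\sim\pi$ independent of $U_1,U_2$. *)

theory Defs
  imports Complex_Main "HOL-Library.FuncSet"
begin

definition simple_graph :: "'a set \<Rightarrow> ('a \<Rightarrow> 'a \<Rightarrow> bool) \<Rightarrow> bool" where
  "simple_graph V E \<longleftrightarrow> finite V \<and> (\<forall>u v. E u v \<longrightarrow> u \<in> V \<and> v \<in> V) \<and>
     (\<forall>u v. E u v \<longrightarrow> E v u) \<and> (\<forall>u. \<not> E u u)"

definition connected_graph :: "'a set \<Rightarrow> ('a \<Rightarrow> 'a \<Rightarrow> bool) \<Rightarrow> bool" where
  "connected_graph V E \<longleftrightarrow> simple_graph V E \<and> V \<noteq> {} \<and> (\<forall>u\<in>V. \<forall>v\<in>V. E\<^sup>*\<^sup>* u v)"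

definition deg :: "'a set \<Rightarrow> ('a \<Rightarrow> 'a \<Rightarrow> bool) \<Rightarrow> 'a \<Rightarrow> nat" where
  "deg V E v = card {u\<in>V. E v u}"

definition min_deg :: "'a set \<Rightarrow> ('a \<Rightarrow> 'a \<Rightarrow> bool) \<Rightarrow> nat" where
  "min_deg V E = Min (deg V E ` V)"

definition max_deg :: "'a set \<Rightarrow> ('a \<Rightarrow> 'a \<Rightarrow> bool) \<Rightarrow> nat" where
  "max_deg V E = Max (deg V E ` V)"

text \<open>Stationary distribution \<pi>(v) = d(v)/(2|E|), where 2|E| = sum of degrees.\<close>
definition stat :: "'a set \<Rightarrow> ('a \<Rightarrow> 'a \<Rightarrow> bool) \<Rightarrow> 'a \<Rightarrow> real" where
  "stat V E v = real (deg V E v) / real (\<Sum>w\<in>V. deg V E w)"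

definition lazyP :: "'a set \<Rightarrow> ('a \<Rightarrow> 'a \<Rightarrow> bool) \<Rightarrow> 'a \<Rightarrow> 'a \<Rightarrow> real" where
  "lazyP V E u v = (if u = v then 1/2 else 0) + (if E u v then 1 / (2 * real (deg V E u)) else 0)"

fun ptrans :: "'a set \<Rightarrow> ('a \<Rightarrow> 'a \<Rightarrow> bool) \<Rightarrow> nat \<Rightarrow> 'a \<Rightarrow> 'a \<Rightarrow> real" where
  "ptrans V E 0 u v = (if u = v then 1 else 0)"
| "ptrans V E (Suc t) u v = (\<Sum>w\<in>V. ptrans V E t u w * lazyP V E w v)"

definition tmix :: "'a set \<Rightarrow> ('a \<Rightarrow> 'a \<Rightarrow> bool) \<Rightarrow> nat" where
  "tmix V E = (LEAST t. \<forall>u\<in>V. \<forall>v\<in>V. \<bar>ptrans V E t u v / stat V E v - 1\<bar> \<le> 1/2)"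

definition bubble :: "'a set \<Rightarrow> ('a \<Rightarrow> 'a \<Rightarrow> bool) \<Rightarrow> real" where
  "bubble V E = (\<Sum>t = 0..tmix V E. real (t + 1) * (SUP v\<in>V. ptrans V E t v v))"

text \<open>Probability that the lazy walk with X_0 ~ \<pi> has trajectory x(0),...,x(k-1)
  (k \<ge> 1 positions).\<close>
definition path_weight :: "'a set \<Rightarrow> ('a \<Rightarrow> 'a \<Rightarrow> bool) \<Rightarrow> nat \<Rightarrow> (nat \<Rightarrow> 'a) \<Rightarrow> real" where
  "path_weight V E k x = stat V E (x 0) * (\<Prod>i<k - 1. lazyP V E (x i) (x (Suc i)))"

text \<open>Close_r(U1,U2) = Pr_\<pi>(\<tau>_{U1} < r and \<tau>_{U2} < r); the event depends only on
  X_0,...,X_{r-1}, and \<tau>_U < r iff X_t \<in> U for some t < r.\<close>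
definition Close :: "'a set \<Rightarrow> ('a \<Rightarrow> 'a \<Rightarrow> bool) \<Rightarrow> nat \<Rightarrow> 'a set \<Rightarrow> 'a set \<Rightarrow> real" where
  "Close V E r U1 U2 = (\<Sum>x \<in> {..<r} \<rightarrow>\<^sub>E V. path_weight V E r x *
      (if (\<exists>t<r. x t \<in> U1) \<and> (\<exists>t<r. x t \<in> U2) then 1 else 0))"

definition run_time :: "real \<Rightarrow> nat \<Rightarrow> nat" where
  "run_time \<alpha> n = nat (round (real n powr (1/2 - \<alpha>/3)))"

text \<open>E[Close_r(Y,Z)] for independent lazy walks Y,Z of length r-1 (r positions)
  with \<pi>-distributed starting points, Y and Z viewed as their vertex sets.\<close>
definition expected_close :: "'a set \<Rightarrow> ('a \<Rightarrow> 'a \<Rightarrow> bool) \<Rightarrow> nat \<Rightarrow> real" where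
  "expected_close V E r = (\<Sum>y \<in> {..<r} \<rightarrow>\<^sub>E V. \<Sum>z \<in> {..<r} \<rightarrow>\<^sub>E V.
      path_weight V E r y * path_weight V E r z * Close V E r (y ` {..<r}) (z ` {..<r}))"

end

theory Submission
  imports Defs
begin


lemma cg_fin: "connected_graph V E \<Longrightarrow> finite V"
  by (simp add: connected_graph_def simple_graph_def)
lemma cg_in1: "connected_graph V E \<Longrightarrow> E u v \<Longrightarrow> u \<in> V"
  by (simp add: connected_graph_def simple_graph_def)
lemma cg_in2: "connected_graph V E \<Longrightarrow> E u v \<Longrightarrow> v \<in> V"
  by (simp add: connected_graph_def simple_graph_def)
lemma cg_sym: "connected_graph V E \<Longrightarrow> E u v \<Longrightarrow> E v u"
  by (simp add: connected_graph_def simple_graph_def)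

lemma deg_pos:
  assumes cg: "connected_graph V E" and c2: "2 \<le> card V" and v: "v \<in> V"
  shows "deg V E v > 0"
proof -
  have fin: "finite V" using cg_fin[OF cg] .
  have "card (V - {v}) \<ge> 1" using c2 v fin by (simp add: card_Diff_singleton)
  then obtain u where u: "u \<in> V" "u \<noteq> v"
    by (metis Diff_iff card.empty empty_iff not_one_le_zero singletonI subsetI subset_empty)
  have "E\<^sup>*\<^sup>* v u" using cg u v by (simp add: connected_graph_def)
  then obtain w where "E v w"
    using u(2) by (metis converse_rtranclpE)
  then have "w \<in> {u\<in>V. E v u}" using cg_in2[OF cg] by auto
  then show ?thesis unfolding deg_def using fin
    by (metis (no_types, lifting) card_gt_0_iff empty_iff finite_subset mem_Collect_eq subsetI)
qed

lemma rowsum: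
  assumes cg: "connected_graph V E" and c2: "2 \<le> card V" and u: "u \<in> V"
  shows "(\<Sum>v\<in>V. lazyP V E u v) = 1"
proof -
  have fin: "finite V" using cg_fin[OF cg] .
  have dp: "deg V E u > 0" using deg_pos[OF cg c2 u] .
  have "(\<Sum>v\<in>V. lazyP V E u v) = (\<Sum>v\<in>V. (if u = v then 1/2 else 0)) +
     (\<Sum>v\<in>V. (if E u v then 1 / (2 * real (deg V E u)) else 0))"
    unfolding lazyP_def by (simp add: sum.distrib)
  also have "(\<Sum>v\<in>V. (if u = v then (1::real)/2 else 0)) = 1/2" using fin u by simp
  also have "(\<Sum>v\<in>V. (if E u v then 1 / (2 * real (deg V E u)) else 0)) =
      (\<Sum>v\<in>{v\<in>V. E u v}. 1 / (2 * real (deg V E u)))"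
    using fin by (simp add: sum.inter_filter[symmetric])
  also have "\<dots> = real (deg V E u) / (2 * real (deg V E u))"
    by (simp add: deg_def)
  also have "\<dots> = 1/2" using dp by simp
  finally show ?thesis by simp
qed

lemma stat_nonneg: "stat V E v \<ge> 0"
  by (auto simp: stat_def intro!: divide_nonneg_nonneg sum_nonneg)

lemma degsum_pos:
  assumes cg: "connected_graph V E" and c2: "2 \<le> card V"
  shows "real (\<Sum>w\<in>V. deg V E w) > 0"
proof -
  have fin: "finite V" using cg_fin[OF cg] .
  have "V \<noteq> {}" using c2 by auto
  then obtain v where v: "v \<in> V" by auto
  have "deg V E v \<le> (\<Sum>w\<in>V. deg V E w)" by (rule member_le_sum[OF v _ fin]) simp
  then show ?thesis using deg_pos[OF cg c2 v] by linarith
qed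

lemma stationary:
  assumes cg: "connected_graph V E" and c2: "2 \<le> card V" and v: "v \<in> V"
  shows "(\<Sum>w\<in>V. stat V E w * lazyP V E w v) = stat V E v"
proof -
  have fin: "finite V" using cg_fin[OF cg] .
  define S where "S = real (\<Sum>w\<in>V. deg V E w)"
  have "(\<Sum>w\<in>V. real (deg V E w) * lazyP V E w v) =
     (\<Sum>w\<in>V. (if w = v then real (deg V E w)/2 else 0)) +
     (\<Sum>w\<in>V. (if E w v then real (deg V E w) / (2 * real (deg V E w)) else 0))"
    unfolding lazyP_def sum.distrib[symmetric] by (rule sum.cong) (auto simp: distrib_left)
  also have "(\<Sum>w\<in>V. (if w = v then real (deg V E w)/2 else 0)) = real (deg V E v) / 2"
    using fin v by simp
  also have "(\<Sum>w\<in>V. (if E w v then real (deg V E w) / (2 * real (deg V E w)) else 0)) =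
      (\<Sum>w\<in>V. (if E w v then 1/2 else 0))"
  proof (rule sum.cong)
    fix w assume w: "w \<in> V"
    show "(if E w v then real (deg V E w) / (2 * real (deg V E w)) else 0) = (if E w v then 1/2 else 0)"
      using deg_pos[OF cg c2 w] by simp
  qed simp
  also have "\<dots> = (\<Sum>w\<in>{w\<in>V. E w v}. 1/2)"
    using fin by (simp add: sum.inter_filter[symmetric])
  also have "{w\<in>V. E w v} = {w\<in>V. E v w}" using cg_sym[OF cg] by blast
  also have "(\<Sum>w\<in>{w\<in>V. E v w}. (1::real)/2) = real (deg V E v) / 2" by (simp add: deg_def)
  finally have h: "(\<Sum>w\<in>V. real (deg V E w) * lazyP V E w v) = real (deg V E v)" by simp
  have "(\<Sum>w\<in>V. stat V E w * lazyP V E w v) = (\<Sum>w\<in>V. real (deg V E w) * lazyP V E w v) / S"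
    unfolding stat_def S_def by (simp add: sum_divide_distrib)
  then show ?thesis using h unfolding stat_def S_def by simp
qed

lemma stat_sum:
  assumes cg: "connected_graph V E" and c2: "2 \<le> card V"
  shows "(\<Sum>w\<in>V. stat V E w) = 1"
  using degsum_pos[OF cg c2] unfolding stat_def by (simp add: sum_divide_distrib[symmetric])

lemma sum_PiE_Suc:
  "(\<Sum>x\<in>{..<Suc k} \<rightarrow>\<^sub>E V. F x) = (\<Sum>x\<in>{..<k} \<rightarrow>\<^sub>E V. \<Sum>v\<in>V. F (x(k:=v)))"
proof -
  have "{..<Suc k} = insert k {..<k}" by auto
  then have "{..<Suc k} \<rightarrow>\<^sub>E V = (\<lambda>(y, g). g(k := y)) ` (V \<times> ({..<k} \<rightarrow>\<^sub>E V))"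
    using PiE_insert_eq[of k "{..<k}" "\<lambda>_. V"] by simp
  moreover have "inj_on (\<lambda>(y, g). g(k := y)) (V \<times> ({..<k} \<rightarrow>\<^sub>E V))"
    using inj_combinator[of k "{..<k}" "\<lambda>_. V"] by simp
  ultimately have "(\<Sum>x\<in>{..<Suc k} \<rightarrow>\<^sub>E V. F x) = (\<Sum>p\<in>V \<times> ({..<k} \<rightarrow>\<^sub>E V). F ((\<lambda>(y, g). g(k := y)) p))"
    by (simp add: sum.reindex)
  also have "\<dots> = (\<Sum>v\<in>V. \<Sum>x\<in>{..<k} \<rightarrow>\<^sub>E V. F (x(k:=v)))"
    by (simp add: sum.cartesian_product split_def)
  also have "\<dots> = (\<Sum>x\<in>{..<k} \<rightarrow>\<^sub>E V. \<Sum>v\<in>V. F (x(k:=v)))"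
    by (rule sum.swap)
  finally show ?thesis .
qed

lemma pw_step:
  assumes "k \<ge> 1"
  shows "path_weight V E (Suc k) (x(k:=v)) = path_weight V E k x * lazyP V E (x (k-1)) v"
proof -
  obtain m where m: "k = Suc m" using assms by (cases k) auto
  have "(\<Prod>i<k. lazyP V E ((x(k:=v)) i) ((x(k:=v)) (Suc i))) =
     (\<Prod>i<m. lazyP V E ((x(k:=v)) i) ((x(k:=v)) (Suc i))) * lazyP V E (x m) v"
    using m by simp
  also have "(\<Prod>i<m. lazyP V E ((x(k:=v)) i) ((x(k:=v)) (Suc i))) = (\<Prod>i<m. lazyP V E (x i) (x (Suc i)))"
    by (rule prod.cong) (auto simp: m)
  finally show ?thesis unfolding path_weight_def using m by simp
qed

lemma pw_nonneg: "path_weight V E k x \<ge> 0"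
  unfolding path_weight_def
  by (intro mult_nonneg_nonneg stat_nonneg prod_nonneg) (auto simp: lazyP_def)

lemma marg_last:
  assumes cg: "connected_graph V E" and c2: "2 \<le> card V" and k: "k \<ge> 1"
  shows "(\<Sum>x\<in>{..<k} \<rightarrow>\<^sub>E V. path_weight V E k x * h (x (k-1))) = (\<Sum>w\<in>V. stat V E w * h w)"
  using k
proof (induction k arbitrary: h rule: dec_induct)
  case base
  have "(\<Sum>x\<in>{..<Suc 0} \<rightarrow>\<^sub>E V. path_weight V E 1 x * h (x 0)) =
      (\<Sum>x\<in>{..<0} \<rightarrow>\<^sub>E V. \<Sum>v\<in>V. path_weight V E 1 (x(0:=v)) * h ((x(0:=v)) 0))"
    by (rule sum_PiE_Suc)
  also have "\<dots> = (\<Sum>w\<in>V. stat V E w * h w)"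
    by (simp add: path_weight_def)
  finally show ?case by simp
next
  case (step k)
  have fin: "finite V" using cg_fin[OF cg] .
  have "(\<Sum>x\<in>{..<Suc k} \<rightarrow>\<^sub>E V. path_weight V E (Suc k) x * h (x (Suc k - 1))) =
      (\<Sum>x\<in>{..<k} \<rightarrow>\<^sub>E V. \<Sum>v\<in>V. path_weight V E (Suc k) (x(k:=v)) * h ((x(k:=v)) (Suc k - 1)))"
    by (rule sum_PiE_Suc)
  also have "\<dots> = (\<Sum>x\<in>{..<k} \<rightarrow>\<^sub>E V. path_weight V E k x * (\<lambda>w. \<Sum>v\<in>V. lazyP V E w v * h v) (x (k-1)))"
    using step.hyps by (intro sum.cong[OF refl]) (simp add: pw_step sum_distrib_left mult.assoc)
  also have "\<dots> = (\<Sum>w\<in>V. stat V E w * (\<Sum>v\<in>V. lazyP V E w v * h v))"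
    by (rule step.IH)
  also have "\<dots> = (\<Sum>v\<in>V. (\<Sum>w\<in>V. stat V E w * lazyP V E w v) * h v)"
  proof -
    have "(\<Sum>w\<in>V. stat V E w * (\<Sum>v\<in>V. lazyP V E w v * h v)) = (\<Sum>w\<in>V. \<Sum>v\<in>V. stat V E w * lazyP V E w v * h v)"
      by (simp add: sum_distrib_left mult.assoc)
    also have "\<dots> = (\<Sum>v\<in>V. \<Sum>w\<in>V. stat V E w * lazyP V E w v * h v)"
      by (rule sum.swap)
    also have "\<dots> = (\<Sum>v\<in>V. (\<Sum>w\<in>V. stat V E w * lazyP V E w v) * h v)"
      by (simp add: sum_distrib_right)
    finally show ?thesis .
  qed
  also have "\<dots> = (\<Sum>v\<in>V. stat V E v * h v)"
    using stationary[OF cg c2] by simp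
  finally show ?case .
qed

lemma marg:
  assumes cg: "connected_graph V E" and c2: "2 \<le> card V" and i: "i < k"
  shows "(\<Sum>x\<in>{..<k} \<rightarrow>\<^sub>E V. path_weight V E k x * h (x i)) = (\<Sum>w\<in>V. stat V E w * h w)"
proof -
  have "Suc i \<le> k" using i by simp
  then show ?thesis
  proof (induction k rule: dec_induct)
    case base
    show ?case using marg_last[OF cg c2, of "Suc i" h] by simp
  next
    case (step k)
    have "(\<Sum>x\<in>{..<Suc k} \<rightarrow>\<^sub>E V. path_weight V E (Suc k) x * h (x i)) =
        (\<Sum>x\<in>{..<k} \<rightarrow>\<^sub>E V. \<Sum>v\<in>V. path_weight V E (Suc k) (x(k:=v)) * h ((x(k:=v)) i))"
      by (rule sum_PiE_Suc)
    also have "\<dots> = (\<Sum>x\<in>{..<k} \<rightarrow>\<^sub>E V. path_weight V E k x * h (x i) * (\<Sum>v\<in>V. lazyP V E (x (k-1)) v))"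
    proof (rule sum.cong[OF refl])
      fix x
      have ik: "i \<noteq> k" "k \<ge> 1" using step.hyps by auto
      have "\<And>v. path_weight V E (Suc k) (x(k:=v)) * h ((x(k:=v)) i) =
          path_weight V E k x * h (x i) * lazyP V E (x (k-1)) v"
        using ik by (simp add: pw_step)
      then have "(\<Sum>v\<in>V. path_weight V E (Suc k) (x(k:=v)) * h ((x(k:=v)) i)) =
          (\<Sum>v\<in>V. path_weight V E k x * h (x i) * lazyP V E (x (k-1)) v)"
        by (intro sum.cong[OF refl])
      also have "\<dots> = path_weight V E k x * h (x i) * (\<Sum>v\<in>V. lazyP V E (x (k-1)) v)"
        by (rule sum_distrib_left[symmetric])
      finally show "(\<Sum>v\<in>V. path_weight V E (Suc k) (x(k:=v)) * h ((x(k:=v)) i)) =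
          path_weight V E k x * h (x i) * (\<Sum>v\<in>V. lazyP V E (x (k-1)) v)" .
    qed
    also have "\<dots> = (\<Sum>x\<in>{..<k} \<rightarrow>\<^sub>E V. path_weight V E k x * h (x i))"
    proof (rule sum.cong)
      fix x assume x: "x \<in> {..<k} \<rightarrow>\<^sub>E V"
      have "k - 1 < k" using step.hyps by auto
      then have "x (k-1) \<in> V" using PiE_mem[OF x] by blast
      then show "path_weight V E k x * h (x i) * (\<Sum>v\<in>V. lazyP V E (x (k-1)) v) = path_weight V E k x * h (x i)"
        by (simp only: rowsum[OF cg c2] mult_1_right)
    qed simp
    finally show ?case using step.IH by simp
  qed
qed

lemma stat_le:
  assumes cg: "connected_graph V E" and c2: "2 \<le> card V"
    and D: "real (max_deg V E) / real (min_deg V E) \<le> D" and v: "v \<in> V"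
  shows "stat V E v \<le> D / real (card V)"
proof -
  have fin: "finite V" using cg_fin[OF cg] .
  have ne: "V \<noteq> {}" using c2 by auto
  have "Min (deg V E ` V) \<in> deg V E ` V"
    by (rule Min_in) (use fin ne in auto)
  then obtain w where w: "w \<in> V" "min_deg V E = deg V E w" unfolding min_deg_def by blast
  have mpos: "min_deg V E > 0" using w deg_pos[OF cg c2 w(1)] by simp
  have dmax: "deg V E v \<le> max_deg V E" unfolding max_deg_def
    by (rule Max_ge) (use fin v in auto)
  have dmin: "\<And>w. w \<in> V \<Longrightarrow> min_deg V E \<le> deg V E w" unfolding min_deg_def
    by (rule Min_le) (use fin in auto)
  have S0: "card V * min_deg V E \<le> (\<Sum>w\<in>V. deg V E w)"
  proof -
    have "(\<Sum>w\<in>V. min_deg V E) \<le> (\<Sum>w\<in>V. deg V E w)" by (rule sum_mono) (rule dmin)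
    then show ?thesis by simp
  qed
  have S: "real (card V) * real (min_deg V E) \<le> real (\<Sum>w\<in>V. deg V E w)"
    using S0 by (metis of_nat_le_iff of_nat_mult)
  have mp: "real (min_deg V E) > 0" using mpos by simp
  have mx: "real (max_deg V E) \<le> D * real (min_deg V E)"
    using D mp by (simp add: divide_le_eq)
  have np: "real (card V) > 0" using c2 by simp
  have dv: "real (deg V E v) \<le> D * real (min_deg V E)"
    using dmax mx by (meson of_nat_le_iff order_trans)
  have "stat V E v = real (deg V E v) / real (\<Sum>w\<in>V. deg V E w)" by (simp add: stat_def)
  also have "\<dots> \<le> (D * real (min_deg V E)) / (real (card V) * real (min_deg V E))"
  proof (rule frac_le)
    show "0 \<le> D * real (min_deg V E)" using dv by (meson of_nat_0_le_iff order_trans)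
    show "real (deg V E v) \<le> D * real (min_deg V E)" by (rule dv)
    show "0 < real (card V) * real (min_deg V E)" using np mp by (rule mult_pos_pos)
    show "real (card V) * real (min_deg V E) \<le> real (\<Sum>w\<in>V. deg V E w)" by (rule S)
  qed
  also have "\<dots> = D / real (card V)" using mp by simp
  finally show ?thesis .
qed

definition hit :: "nat \<Rightarrow> (nat \<Rightarrow> 'a) \<Rightarrow> (nat \<Rightarrow> 'a) \<Rightarrow> real" where
  "hit r x y = (if \<exists>t<r. x t \<in> y ` {..<r} then 1 else 0)"

lemma hit_le: "hit r x y \<le> (\<Sum>s<r. \<Sum>i<r. if x s = y i then 1 else 0)"
proof (cases "\<exists>t<r. x t \<in> y ` {..<r}")
  case True
  then obtain s i where si: "s < r" "i < r" "x s = y i" by auto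
  have "(1::real) \<le> (\<Sum>i<r. if x s = y i then 1 else 0)"
    using member_le_sum[of i "{..<r}" "\<lambda>i. if x s = y i then (1::real) else 0"] si by simp
  also have "\<dots> \<le> (\<Sum>s<r. \<Sum>i<r. if x s = y i then 1 else 0)"
    using member_le_sum[of s "{..<r}" "\<lambda>s. \<Sum>i<r. if x s = y i then (1::real) else 0"] si
    by (simp add: sum_nonneg)
  finally show ?thesis using True by (simp add: hit_def)
next
  case False
  then show ?thesis unfolding hit_def by (simp only: if_False) (intro sum_nonneg, simp)
qed

lemma hit_bound:
  assumes cg: "connected_graph V E" and c2: "2 \<le> card V"
    and M: "\<And>v. v \<in> V \<Longrightarrow> stat V E v \<le> M"
    and x: "x \<in> {..<r} \<rightarrow>\<^sub>E V"
  shows "(\<Sum>y\<in>{..<r} \<rightarrow>\<^sub>E V. path_weight V E r y * hit r x y) \<le> real r * real r * M"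
proof -
  have fin: "finite V" using cg_fin[OF cg] .
  let ?P = "{..<r} \<rightarrow>\<^sub>E V"
  have "(\<Sum>y\<in>?P. path_weight V E r y * hit r x y) \<le>
     (\<Sum>y\<in>?P. path_weight V E r y * (\<Sum>s<r. \<Sum>i<r. if x s = y i then 1 else 0))"
    by (intro sum_mono mult_left_mono hit_le pw_nonneg)
  also have "\<dots> = (\<Sum>y\<in>?P. \<Sum>s<r. \<Sum>i<r. path_weight V E r y * (if x s = y i then 1 else 0))"
    by (simp add: sum_distrib_left)
  also have "\<dots> = (\<Sum>s<r. \<Sum>y\<in>?P. \<Sum>i<r. path_weight V E r y * (if x s = y i then 1 else 0))"
    by (rule sum.swap)
  also have "\<dots> = (\<Sum>s<r. \<Sum>i<r. \<Sum>y\<in>?P. path_weight V E r y * (if x s = y i then 1 else 0))"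
    by (rule sum.cong[OF refl], rule sum.swap)
  also have "\<dots> = (\<Sum>s<r. \<Sum>i<r. stat V E (x s))"
  proof (intro sum.cong[OF refl])
    fix s i assume s: "s \<in> {..<r}" and i: "i \<in> {..<r}"
    have xs: "x s \<in> V" using PiE_mem[OF x s] .
    have "(\<Sum>y\<in>?P. path_weight V E r y * (\<lambda>w. if x s = w then 1 else 0) (y i)) =
       (\<Sum>w\<in>V. stat V E w * (\<lambda>w. if x s = w then 1 else 0) w)"
      using i by (intro marg[OF cg c2]) simp
    also have "\<dots> = stat V E (x s)" using fin xs by (simp add: if_distrib cong: if_cong)
    finally show "(\<Sum>y\<in>?P. path_weight V E r y * (if x s = y i then 1 else 0)) = stat V E (x s)" by simp
  qed
  also have "\<dots> \<le> (\<Sum>s<r. \<Sum>i<r. M)"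
    by (intro sum_mono M PiE_mem[OF x]) simp
  also have "\<dots> = real r * real r * M" by simp
  finally show ?thesis .
qed

lemma total:
  assumes cg: "connected_graph V E" and c2: "2 \<le> card V" and r: "r \<ge> 1"
  shows "(\<Sum>x\<in>{..<r} \<rightarrow>\<^sub>E V. path_weight V E r x) = 1"
  using marg[OF cg c2, of 0 r "\<lambda>_. 1"] r stat_sum[OF cg c2] by simp

lemma main_bound:
  assumes cg: "connected_graph V E" and c2: "2 \<le> card V"
    and D: "real (max_deg V E) / real (min_deg V E) \<le> D"
  shows "expected_close V E r \<le> D^2 * (real r / sqrt (real (card V))) ^ 4"
proof -
  let ?P = "{..<r} \<rightarrow>\<^sub>E V"
  let ?W = "path_weight V E r"
  define M where "M = D / real (card V)"
  define K where "K = real r * real r * M"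
  define A where "A x = (\<Sum>y\<in>?P. ?W y * hit r x y)" for x
  have Ms: "\<And>v. v \<in> V \<Longrightarrow> stat V E v \<le> M" unfolding M_def using stat_le[OF cg c2 D] .
  have hnn: "\<And>x y. hit r x y \<ge> 0" by (simp add: hit_def)
  have Ann: "\<And>x. A x \<ge> 0" unfolding A_def by (intro sum_nonneg mult_nonneg_nonneg pw_nonneg hnn)
  have AK: "\<And>x. x \<in> ?P \<Longrightarrow> A x \<le> K" unfolding A_def K_def by (rule hit_bound[OF cg c2 Ms])
  have Cl: "\<And>y z. Close V E r (y ` {..<r}) (z ` {..<r}) = (\<Sum>x\<in>?P. ?W x * (hit r x y * hit r x z))"
    unfolding Close_def hit_def by (intro sum.cong[OF refl]) auto
  have "expected_close V E r = (\<Sum>y\<in>?P. \<Sum>z\<in>?P. \<Sum>x\<in>?P. ?W x * ((?W y * hit r x y) * (?W z * hit r x z)))"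
    unfolding expected_close_def Cl
    by (intro sum.cong[OF refl]) (simp add: sum_distrib_left mult_ac)
  also have "\<dots> = (\<Sum>y\<in>?P. \<Sum>x\<in>?P. \<Sum>z\<in>?P. ?W x * ((?W y * hit r x y) * (?W z * hit r x z)))"
    by (rule sum.cong[OF refl]) (rule sum.swap)
  also have "\<dots> = (\<Sum>x\<in>?P. \<Sum>y\<in>?P. \<Sum>z\<in>?P. ?W x * ((?W y * hit r x y) * (?W z * hit r x z)))"
    by (rule sum.swap[of "\<lambda>y x. \<Sum>z\<in>?P. ?W x * ((?W y * hit r x y) * (?W z * hit r x z))"])
  also have "\<dots> = (\<Sum>x\<in>?P. ?W x * (A x * A x))"
  proof (intro sum.cong[OF refl])
    fix x
    have "A x * A x = (\<Sum>y\<in>?P. \<Sum>z\<in>?P. (?W y * hit r x y) * (?W z * hit r x z))"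
      unfolding A_def by (rule sum_product)
    then show "(\<Sum>y\<in>?P. \<Sum>z\<in>?P. ?W x * ((?W y * hit r x y) * (?W z * hit r x z))) = ?W x * (A x * A x)"
      by (simp add: sum_distrib_left)
  qed
  also have "\<dots> \<le> (\<Sum>x\<in>?P. ?W x * (K * K))"
    by (intro sum_mono mult_left_mono mult_mono AK Ann pw_nonneg) (auto intro: order_trans[OF Ann AK])
  also have "\<dots> = K * K * (\<Sum>x\<in>?P. ?W x)"
    by (simp add: sum_distrib_left mult_ac)
  also have "\<dots> = K * K"
  proof (cases "r = 0")
    case True then show ?thesis by (simp add: K_def)
  next
    case False then show ?thesis using total[OF cg c2, of r] by simp
  qed
  also have "\<dots> = D^2 * (real r / sqrt (real (card V))) ^ 4"
  proof -
    have n: "real (card V) > 0" using c2 by simp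
    have "(sqrt (real (card V))) ^ 4 = real (card V) ^ 2"
      using n by (metis (no_types, lifting) numeral_Bit0 power_add power2_eq_square real_sqrt_pow2 less_imp_le)
    then show ?thesis unfolding K_def M_def using n
      by (simp add: power_divide field_simps power2_eq_square eval_nat_numeral)
  qed
  finally show ?thesis .
qed



theorem mainTheorem8:
  fixes D \<alpha> \<theta> :: real
  assumes "D > 0" and "\<alpha> > 0" and "\<theta> > 0"
  shows "\<exists>C::real. \<exists>N::nat. \<forall>(V::nat set) E.
    connected_graph V E \<and> card V \<ge> N \<and>
    real (max_deg V E) / real (min_deg V E) \<le> D \<and>
    real (tmix V E) \<le> real (card V) powr (1/2 - \<alpha>) \<and>
    bubble V E \<le> \<theta> \<longrightarrow>
    expected_close V E (run_time \<alpha> (card V))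
      \<le> C * (real (run_time \<alpha> (card V)) / sqrt (real (card V))) ^ 4"
proof (intro exI[of _ "D^2"] exI[of _ 2] allI impI)
  fix V :: "nat set" and E
  assume h: "connected_graph V E \<and> 2 \<le> card V \<and>
    real (max_deg V E) / real (min_deg V E) \<le> D \<and>
    real (tmix V E) \<le> real (card V) powr (1/2 - \<alpha>) \<and> bubble V E \<le> \<theta>"
  then have c1: "connected_graph V E" and c2: "2 \<le> card V"
    and c3: "real (max_deg V E) / real (min_deg V E) \<le> D" by auto
  show "expected_close V E (run_time \<alpha> (card V))
      \<le> D^2 * (real (run_time \<alpha> (card V)) / sqrt (real (card V))) ^ 4"
    by (rule main_bound[OF c1 c2 c3])
qed

end
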